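(* If $\mathfrak a$ is a nonzero $\mathfrak q\times\mathfrak q$-stable ideal of $A$, then $\mathfrak a+\mathfrak m=A$.
   Context: Fix $\zeta\in\mathbb{C}$ with $\zeta^2=-1$. Let $\mathbf{V}=\mathbb{C}^{\infty|\infty}$ with even basis $\{e_i\}$, odd basis $\{f_i\}$, odd involution $\alpha(e_i)=f_i,\alpha(f_i)=e_i$; $\mathfrak q$ is the infinite queer Lie superalgebra of finitary matrices $\begin{pmatrix} a & b\\ -b & a\end{pmatrix}$ acting on $\mathbf V$. $\mathbf U$ is the $\zeta$-eigenspace of $\alpha\otimes\alpha$ on $\mathbf V\otimes\mathbf V$ (Koszul signs), with basis $v_{i,j}=(1+\zeta)e_i\otimes e_j+(1-\zeta)f_i\otimes f_j$, $w_{i,j}=(1+\zeta)e_i\otimes f_j+(1-\zeta)f_i\otimes e_j$; $A=\mathrm{Sym}(\mathbf U)$ is the polynomial superalgebra in even $x_{i,j}$ and odd $y_{i,j}$ corresponding to them, with $\mathfrak q\times\mathfrak q$ acting by superderivations. $\mathfrak m$ is the ideal of $A$ generated by all $x_{i,j}-\delta_{i,j}$ and $y_{i,j}$. *)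

theory Defs
  imports Complex_Main "HOL-Library.Poly_Mapping" "HOL-Library.FSet" "HOL-Library.Product_Lexorder"
begin

text \<open>A monomial is a pair (m, S):
  m : exponents of the even variables x_(i,j) (finitely supported), S : the finite set of
  odd variables y_(i,j) occurring. The basis element (m,S) stands for
  x^m * y_(s1) * ... * y_(sk), where s1 < ... < sk is S listed in the lexicographic order
  of nat * nat.\<close>

type_synonym idx = "nat \<times> nat"
type_synonym mono = "(idx \<Rightarrow>\<^sub>0 nat) \<times> idx fset"
type_synonym A = "mono \<Rightarrow>\<^sub>0 complex"

definition inv_count :: "idx fset \<Rightarrow> idx fset \<Rightarrow> nat" where
  "inv_count S T = card {(s, t). s |\<in>| S \<and> t |\<in>| T \<and> t < s}"

definition mono_sign :: "mono \<Rightarrow> mono \<Rightarrow> complex" where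
  "mono_sign M N = (if snd M |\<inter>| snd N = {||} then (-1) ^ inv_count (snd M) (snd N) else 0)"

definition mono_mul :: "mono \<Rightarrow> mono \<Rightarrow> mono" where
  "mono_mul M N = (fst M + fst N, snd M |\<union>| snd N)"

definition amul :: "A \<Rightarrow> A \<Rightarrow> A" where
  "amul f g = (\<Sum>(M, N) \<in> Poly_Mapping.keys f \<times> Poly_Mapping.keys g.
      Poly_Mapping.single (mono_mul M N) (Poly_Mapping.lookup f M * Poly_Mapping.lookup g N * mono_sign M N))"

definition aone :: A where "aone = Poly_Mapping.single (0, {||}) 1"

definition xvar :: "idx \<Rightarrow> A" where "xvar ij = Poly_Mapping.single (Poly_Mapping.single ij 1, {||}) 1"
definition yvar :: "idx \<Rightarrow> A" where "yvar ij = Poly_Mapping.single (0, {|ij|}) 1"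

definition smul :: "complex \<Rightarrow> A \<Rightarrow> A" where "smul c f = Poly_Mapping.map (\<lambda>v. c * v) f"

definition monoA :: "mono \<Rightarrow> A" where "monoA M = Poly_Mapping.single M 1"

definition is_ideal :: "A set \<Rightarrow> bool" where
  "is_ideal I \<longleftrightarrow> 0 \<in> I \<and> (\<forall>f\<in>I. \<forall>g\<in>I. f + g \<in> I) \<and>
     (\<forall>r f. f \<in> I \<longrightarrow> amul r f \<in> I \<and> amul f r \<in> I)"

definition ideal_gen :: "A set \<Rightarrow> A set" where
  "ideal_gen G = \<Inter>{I. is_ideal I \<and> G \<subseteq> I}"

definition m_ideal :: "A set" where
  "m_ideal = ideal_gen ({xvar (i, j) - (if i = j then aone else 0) | i j. True} \<union> range yvar)"

text \<open>An element of q is a pair (a,b) of finitary matrices, representing the block matrix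
  [[a, b], [-b, a]] on V with respect to the basis (e_i) then (f_i).  Basis vectors of V
  are (P,i) with P = False for e_i and P = True for f_i.\<close>

type_synonym qelt = "(idx \<Rightarrow>\<^sub>0 complex) \<times> (idx \<Rightarrow>\<^sub>0 complex)"

text \<open>Coefficient of basis vector (R,i) in X applied to basis vector (P,k).\<close>
definition matq :: "qelt \<Rightarrow> bool \<times> nat \<Rightarrow> bool \<times> nat \<Rightarrow> complex" where
  "matq X Ri Pk = (let (a, b) = X; (R, i) = Ri; (P, k) = Pk in
     if R = P then Poly_Mapping.lookup a (i, k) else if P then Poly_Mapping.lookup b (i, k) else - Poly_Mapping.lookup b (i, k))"

text \<open>For (X,Y) in q x q homogeneous of parity p (True = odd): coefficient of
  (R,i) (x) (S,j) in (X,Y).((P,k) (x) (Q,l)) = X(P,k) (x) (Q,l) + (-1)^(p |P|) (P,k) (x) Y(Q,l).\<close>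
definition tcoef :: "bool \<Rightarrow> qelt \<Rightarrow> qelt \<Rightarrow> (bool \<times> nat \<times> bool \<times> nat) \<Rightarrow> (bool \<times> nat \<times> bool \<times> nat) \<Rightarrow> complex" where
  "tcoef p X Y src tgt = (let (P, k, Q, l) = src; (R, i, S, j) = tgt in
     (if S = Q \<and> j = l then matq X (R, i) (P, k) else 0) +
     (if R = P \<and> i = k then (if p \<and> P then -1 else 1) * matq Y (S, j) (Q, l) else 0))"


text \<open>zeta is a fixed complex number with zeta^2 = -1 (passed as a parameter).
  Coefficients of (X,Y).v_(k,l) and (X,Y).w_(k,l) in V (x) V.\<close>
definition vimg :: "complex \<Rightarrow> bool \<Rightarrow> qelt \<Rightarrow> qelt \<Rightarrow> idx \<Rightarrow> (bool \<times> nat \<times> bool \<times> nat) \<Rightarrow> complex" where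
  "vimg zeta p X Y kl t = (1 + zeta) * tcoef p X Y (False, fst kl, False, snd kl) t
                   + (1 - zeta) * tcoef p X Y (True, fst kl, True, snd kl) t"
definition wimg :: "complex \<Rightarrow> bool \<Rightarrow> qelt \<Rightarrow> qelt \<Rightarrow> idx \<Rightarrow> (bool \<times> nat \<times> bool \<times> nat) \<Rightarrow> complex" where
  "wimg zeta p X Y kl t = (1 + zeta) * tcoef p X Y (False, fst kl, True, snd kl) t
                   + (1 - zeta) * tcoef p X Y (True, fst kl, False, snd kl) t"

text \<open>An element t of U = sum c_ij v_ij + d_ij w_ij has e_i(x)e_j-coefficient (1+zeta) c_ij and
  e_i(x)f_j-coefficient (1+zeta) d_ij; convert to the corresponding element sum c x + d y of A.\<close>
definition U_to_A :: "complex \<Rightarrow> ((bool \<times> nat \<times> bool \<times> nat) \<Rightarrow> complex) \<Rightarrow> A" where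
  "U_to_A zeta t = (let c = (\<lambda>(i,j). t (False, i, False, j) / (1 + zeta));
                   d = (\<lambda>(i,j). t (False, i, True, j) / (1 + zeta)) in
     (\<Sum>ij \<in> {ij. c ij \<noteq> 0 \<or> d ij \<noteq> 0}.
        smul (c ij) (xvar ij) + smul (d ij) (yvar ij)))"

text \<open>Superderivation of parity p on A determined by images gx, gy of the generators
  x_ij, y_ij, applied to the basis monomial x^m y_(s1) ... y_(sk).\<close>
definition der_mono :: "bool \<Rightarrow> (idx \<Rightarrow> A) \<Rightarrow> (idx \<Rightarrow> A) \<Rightarrow> mono \<Rightarrow> A" where
  "der_mono p gx gy M = (let (m, S) = M; s = sorted_list_of_fset S in
     (\<Sum>v \<in> Poly_Mapping.keys m. smul (of_nat (Poly_Mapping.lookup m v))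
         (amul (monoA (m - Poly_Mapping.single v 1, {||})) (amul (gx v) (monoA (0, S))))) +
     (\<Sum>l < length s. smul (if p then (-1) ^ l else 1)
         (amul (monoA (m, fset_of_list (take l s)))
               (amul (gy (s ! l)) (monoA (0, fset_of_list (drop (Suc l) s)))))))"

definition der :: "bool \<Rightarrow> (idx \<Rightarrow> A) \<Rightarrow> (idx \<Rightarrow> A) \<Rightarrow> A \<Rightarrow> A" where
  "der p gx gy f = (\<Sum>M \<in> Poly_Mapping.keys f. smul (Poly_Mapping.lookup f M) (der_mono p gx gy M))"

definition act_hom :: "complex \<Rightarrow> bool \<Rightarrow> qelt \<Rightarrow> qelt \<Rightarrow> A \<Rightarrow> A" where
  "act_hom zeta p X Y = der p (\<lambda>kl. U_to_A zeta (vimg zeta p X Y kl)) (\<lambda>kl. U_to_A zeta (wimg zeta p X Y kl))"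

definition act :: "complex \<Rightarrow> qelt \<times> qelt \<Rightarrow> A \<Rightarrow> A" where
  "act zeta g f = (let ((a, b), (a', b')) = g in
     act_hom zeta False (a, 0) (a', 0) f + act_hom zeta True (0, b) (0, b') f)"

definition qq_stable :: "complex \<Rightarrow> A set \<Rightarrow> bool" where
  "qq_stable zeta I \<longleftrightarrow> (\<forall>g. \<forall>f \<in> I. act zeta g f \<in> I)"

end

theory Submission
  imports Defs
begin


lemma lookup_map': "Poly_Mapping.lookup (Poly_Mapping.map g f) k = (if Poly_Mapping.lookup f k = 0 then 0 else g (Poly_Mapping.lookup f k))"
  by (simp add: Poly_Mapping.map.rep_eq when_def)

lemma lookup_smul[simp]: "Poly_Mapping.lookup (smul c f) M = c * Poly_Mapping.lookup f M"
  by (simp add: smul_def lookup_map')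

lemma smul_single[simp]: "smul c (Poly_Mapping.single M a) = Poly_Mapping.single M (c * a)"
  by (rule poly_mapping_eqI) (simp add: lookup_single when_def)

lemma smul_add: "smul c (f + g) = smul c f + smul c g"
  by (rule poly_mapping_eqI) (simp add: lookup_add algebra_simps)

lemma smul_zero[simp]: "smul c 0 = 0" "smul 0 f = 0"
  by (rule poly_mapping_eqI, simp)+

lemma smul_sum: "smul c (sum F X) = (\<Sum>x\<in>X. smul c (F x))"
  by (rule poly_mapping_eqI) (simp add: lookup_sum sum_distrib_left)

lemma smul_smul[simp]: "smul c (smul d f) = smul (c*d) f"
  by (rule poly_mapping_eqI) simp

lemma smul_one[simp]: "smul 1 f = f"
  by (rule poly_mapping_eqI) simp

lemma smul_minus: "smul (-1) f = - f"
  by (rule poly_mapping_eqI) simp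

lemma poly_mapping_expand: "finite K \<Longrightarrow> Poly_Mapping.keys f \<subseteq> K \<Longrightarrow> (\<Sum>M\<in>K. Poly_Mapping.single M (Poly_Mapping.lookup f M)) = f"
  apply (rule poly_mapping_eqI)
  apply (simp add: lookup_sum lookup_single when_def)
  by (metis in_keys_iff subsetD)

section \<open>linear functionals\<close>

definition lin :: "(mono \<Rightarrow> complex) \<Rightarrow> A \<Rightarrow> complex" where
  "lin w f = (\<Sum>M\<in>Poly_Mapping.keys f. Poly_Mapping.lookup f M * w M)"

lemma lin_superset: "finite K \<Longrightarrow> Poly_Mapping.keys f \<subseteq> K \<Longrightarrow> lin w f = (\<Sum>M\<in>K. Poly_Mapping.lookup f M * w M)"
  unfolding lin_def by (rule sum.mono_neutral_left) (auto simp: in_keys_iff)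

lemma lin_add[simp]: "lin w (f + g) = lin w f + lin w g"
proof -
  let ?K = "Poly_Mapping.keys f \<union> Poly_Mapping.keys g"
  have "lin w (f+g) = (\<Sum>M\<in>?K. Poly_Mapping.lookup (f+g) M * w M)"
    using keys_add[of f g] by (intro lin_superset) auto
  also have "\<dots> = (\<Sum>M\<in>?K. Poly_Mapping.lookup f M * w M) + (\<Sum>M\<in>?K. Poly_Mapping.lookup g M * w M)"
    by (simp add: lookup_add algebra_simps sum.distrib)
  also have "\<dots> = lin w f + lin w g"
    using lin_superset[of ?K f w] lin_superset[of ?K g w] by auto
  finally show ?thesis .
qed

lemma lin_zero[simp]: "lin w 0 = 0" by (simp add: lin_def)

lemma lin_smul[simp]: "lin w (smul c f) = c * lin w f"
proof -
  have "lin w (smul c f) = (\<Sum>M\<in>Poly_Mapping.keys f. Poly_Mapping.lookup (smul c f) M * w M)"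
    by (rule lin_superset) (auto simp: in_keys_iff)
  thus ?thesis by (simp add: lin_def sum_distrib_left algebra_simps)
qed

lemma lin_single[simp]: "lin w (Poly_Mapping.single M c) = c * w M"
  by (simp add: lin_def)

lemma lin_sum: "lin w (sum F X) = (\<Sum>x\<in>X. lin w (F x))"
  by (induction X rule: infinite_finite_induct) auto

lemma lin_minus[simp]: "lin w (f - g) = lin w f - lin w g"
  using lin_add[of w "f - g" g] by simp

section \<open>multiplication\<close>

lemma amul_superset:
  assumes "finite K1" "finite K2" "Poly_Mapping.keys f \<subseteq> K1" "Poly_Mapping.keys g \<subseteq> K2"
  shows "amul f g = (\<Sum>(M, N) \<in> K1 \<times> K2.
      Poly_Mapping.single (mono_mul M N) (Poly_Mapping.lookup f M * Poly_Mapping.lookup g N * mono_sign M N))"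
  unfolding amul_def
proof (rule sum.mono_neutral_left)
  show "finite (K1 \<times> K2)" using assms by simp
  show "Poly_Mapping.keys f \<times> Poly_Mapping.keys g \<subseteq> K1 \<times> K2" using assms by blast
  show "\<forall>i\<in>K1 \<times> K2 - Poly_Mapping.keys f \<times> Poly_Mapping.keys g.
       (case i of (M, N) \<Rightarrow> Poly_Mapping.single (mono_mul M N) (Poly_Mapping.lookup f M * Poly_Mapping.lookup g N * mono_sign M N)) = 0"
  proof (intro ballI)
    fix i assume "i \<in> K1 \<times> K2 - Poly_Mapping.keys f \<times> Poly_Mapping.keys g"
    then obtain M N where i: "i = (M,N)" and "M \<notin> Poly_Mapping.keys f \<or> N \<notin> Poly_Mapping.keys g" by auto
    hence "Poly_Mapping.lookup f M = 0 \<or> Poly_Mapping.lookup g N = 0" by (simp add: in_keys_iff)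
    thus "(case i of (M, N) \<Rightarrow> Poly_Mapping.single (mono_mul M N) (Poly_Mapping.lookup f M * Poly_Mapping.lookup g N * mono_sign M N)) = 0"
      using i by auto
  qed
qed

lemma amul_add_left: "amul (f + g) h = amul f h + amul g h"
proof -
  let ?K = "Poly_Mapping.keys f \<union> Poly_Mapping.keys g"
  let ?L = "Poly_Mapping.keys h"
  have k: "Poly_Mapping.keys (f+g) \<subseteq> ?K" by (rule keys_add)
  have e1: "amul (f+g) h = (\<Sum>(M, N) \<in> ?K \<times> ?L. Poly_Mapping.single (mono_mul M N) (Poly_Mapping.lookup (f+g) M * Poly_Mapping.lookup h N * mono_sign M N))"
    using amul_superset[of ?K ?L "f+g" h] k by simp
  have e2: "amul f h = (\<Sum>(M, N) \<in> ?K \<times> ?L. Poly_Mapping.single (mono_mul M N) (Poly_Mapping.lookup f M * Poly_Mapping.lookup h N * mono_sign M N))"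
    using amul_superset[of ?K ?L] by simp
  have e3: "amul g h = (\<Sum>(M, N) \<in> ?K \<times> ?L. Poly_Mapping.single (mono_mul M N) (Poly_Mapping.lookup g M * Poly_Mapping.lookup h N * mono_sign M N))"
    using amul_superset[of ?K ?L] by simp
  show ?thesis unfolding e1 e2 e3 sum.distrib[symmetric]
    by (rule sum.cong) (auto simp: lookup_add distrib_right single_add)
qed

lemma amul_add_right: "amul h (f + g) = amul h f + amul h g"
proof -
  let ?K = "Poly_Mapping.keys f \<union> Poly_Mapping.keys g"
  let ?L = "Poly_Mapping.keys h"
  have k: "Poly_Mapping.keys (f+g) \<subseteq> ?K" by (rule keys_add)
  have e1: "amul h (f+g) = (\<Sum>(M, N) \<in> ?L \<times> ?K. Poly_Mapping.single (mono_mul M N) (Poly_Mapping.lookup h M * Poly_Mapping.lookup (f+g) N * mono_sign M N))"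
    using amul_superset[of ?L ?K h "f+g"] k by simp
  have e2: "amul h f = (\<Sum>(M, N) \<in> ?L \<times> ?K. Poly_Mapping.single (mono_mul M N) (Poly_Mapping.lookup h M * Poly_Mapping.lookup f N * mono_sign M N))"
    using amul_superset[of ?L ?K] by simp
  have e3: "amul h g = (\<Sum>(M, N) \<in> ?L \<times> ?K. Poly_Mapping.single (mono_mul M N) (Poly_Mapping.lookup h M * Poly_Mapping.lookup g N * mono_sign M N))"
    using amul_superset[of ?L ?K] by simp
  show ?thesis unfolding e1 e2 e3 sum.distrib[symmetric]
    by (rule sum.cong) (auto simp: lookup_add distrib_right distrib_left single_add)
qed

lemma amul_zero[simp]: "amul 0 f = 0" "amul f 0 = 0"
  by (simp_all add: amul_def)

lemma keys_smul: "Poly_Mapping.keys (smul c f) \<subseteq> Poly_Mapping.keys f"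
  by (simp add: in_keys_iff subset_iff)

lemma amul_smul_left: "amul (smul c f) g = smul c (amul f g)"
proof -
  have e1: "amul (smul c f) g = (\<Sum>(M, N) \<in> Poly_Mapping.keys f \<times> Poly_Mapping.keys g. Poly_Mapping.single (mono_mul M N) (Poly_Mapping.lookup (smul c f) M * Poly_Mapping.lookup g N * mono_sign M N))"
    by (rule amul_superset) (use keys_smul in simp_all)
  have "(\<Sum>(M, N) \<in> Poly_Mapping.keys f \<times> Poly_Mapping.keys g. Poly_Mapping.single (mono_mul M N) (Poly_Mapping.lookup (smul c f) M * Poly_Mapping.lookup g N * mono_sign M N)) = smul c (amul f g)"
    unfolding amul_def smul_sum
    by (rule sum.cong) (auto simp: algebra_simps)
  with e1 show ?thesis by simp
qed

lemma amul_smul_right: "amul f (smul c g) = smul c (amul f g)"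
proof -
  have e1: "amul f (smul c g) = (\<Sum>(M, N) \<in> Poly_Mapping.keys f \<times> Poly_Mapping.keys g. Poly_Mapping.single (mono_mul M N) (Poly_Mapping.lookup f M * Poly_Mapping.lookup (smul c g) N * mono_sign M N))"
    by (rule amul_superset) (use keys_smul in simp_all)
  have "(\<Sum>(M, N) \<in> Poly_Mapping.keys f \<times> Poly_Mapping.keys g. Poly_Mapping.single (mono_mul M N) (Poly_Mapping.lookup f M * Poly_Mapping.lookup (smul c g) N * mono_sign M N)) = smul c (amul f g)"
    unfolding amul_def smul_sum
    by (rule sum.cong) (auto simp: algebra_simps)
  with e1 show ?thesis by simp
qed

lemma amul_single: "amul (Poly_Mapping.single M a) (Poly_Mapping.single N b) =
   Poly_Mapping.single (mono_mul M N) (a * b * mono_sign M N)"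
  by (subst amul_superset[of "{M}" "{N}"]) auto

lemma mono_sign_empty[simp]: "mono_sign M (m, {||}) = 1" "mono_sign (m, {||}) M = 1"
  by (auto simp: mono_sign_def inv_count_def)

lemma amul_single_right: "amul f (Poly_Mapping.single N b) = (\<Sum>M\<in>Poly_Mapping.keys f.
   Poly_Mapping.single (mono_mul M N) (Poly_Mapping.lookup f M * b * mono_sign M N))"
  apply (subst amul_superset[of "Poly_Mapping.keys f" "{N}"], simp, simp, simp, simp)
  apply (subst sum.cartesian_product[symmetric])
  by simp

lemma amul_single_left: "amul (Poly_Mapping.single M a) f = (\<Sum>N\<in>Poly_Mapping.keys f.
   Poly_Mapping.single (mono_mul M N) (a * Poly_Mapping.lookup f N * mono_sign M N))"
  apply (subst amul_superset[of "{M}" "Poly_Mapping.keys f"], simp, simp, simp, simp)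
  apply (subst sum.cartesian_product[symmetric])
  by simp

lemma amul_one_right[simp]: "amul f aone = f"
  unfolding aone_def amul_single_right
  by (simp add: mono_mul_def poly_mapping_expand)

lemma amul_one_left[simp]: "amul aone f = f"
  unfolding aone_def amul_single_left
  by (simp add: mono_mul_def poly_mapping_expand)

lemma amul_sum_right: "amul h (sum F X) = (\<Sum>x\<in>X. amul h (F x))"
  by (induction X rule: infinite_finite_induct) (auto simp: amul_add_right)

lemma amul_sum_left: "amul (sum F X) h = (\<Sum>x\<in>X. amul (F x) h)"
  by (induction X rule: infinite_finite_induct) (auto simp: amul_add_left)

lemma amul_minus_right: "amul h (f - g) = amul h f - amul h g"
  using amul_add_right[of h "f - g" g] by simp


section \<open>ideals\<close>

lemma ideal_gen_ideal: "is_ideal (ideal_gen G)"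
proof -
  let ?F = "{I. is_ideal I \<and> G \<subseteq> I}"
  have z: "0 \<in> \<Inter>?F" by (simp add: is_ideal_def)
  have a: "f \<in> \<Inter>?F \<Longrightarrow> g \<in> \<Inter>?F \<Longrightarrow> f + g \<in> \<Inter>?F" for f g by (simp add: is_ideal_def)
  have m: "f \<in> \<Inter>?F \<Longrightarrow> amul r f \<in> \<Inter>?F \<and> amul f r \<in> \<Inter>?F" for r f by (simp add: is_ideal_def)
  have "is_ideal (\<Inter>?F)" unfolding is_ideal_def[of "\<Inter>?F"]
  proof (intro conjI ballI allI impI)
    show "0 \<in> \<Inter>?F" by (rule z)
  next
    fix f g assume "f \<in> \<Inter>?F" "g \<in> \<Inter>?F" thus "f + g \<in> \<Inter>?F" by (rule a)
  next
    fix r f assume "f \<in> \<Inter>?F" thus "amul r f \<in> \<Inter>?F" using m[of f r] by simp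
  next
    fix r f assume "f \<in> \<Inter>?F" thus "amul f r \<in> \<Inter>?F" using m[of f r] by simp
  qed
  thus ?thesis unfolding ideal_gen_def .
qed

lemma ideal_gen_sub: "G \<subseteq> ideal_gen G"
  unfolding ideal_gen_def by (rule Inter_greatest) simp

lemma ideal_add: "is_ideal I \<Longrightarrow> f \<in> I \<Longrightarrow> g \<in> I \<Longrightarrow> f + g \<in> I"
  by (simp add: is_ideal_def)
lemma ideal_zero: "is_ideal I \<Longrightarrow> 0 \<in> I"
  by (simp add: is_ideal_def)
lemma ideal_mul_left: "is_ideal I \<Longrightarrow> f \<in> I \<Longrightarrow> amul r f \<in> I"
  by (simp add: is_ideal_def)
lemma ideal_mul_right: "is_ideal I \<Longrightarrow> f \<in> I \<Longrightarrow> amul f r \<in> I"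
  by (simp add: is_ideal_def)
lemma ideal_smul: "is_ideal I \<Longrightarrow> f \<in> I \<Longrightarrow> smul c f \<in> I"
  using ideal_mul_left[of I f "smul c aone"] by (simp add: amul_smul_left)
lemma ideal_uminus: "is_ideal I \<Longrightarrow> f \<in> I \<Longrightarrow> - f \<in> I"
  using ideal_smul[of I f "-1"] by (simp add: smul_minus)
lemma ideal_diff: "is_ideal I \<Longrightarrow> f \<in> I \<Longrightarrow> g \<in> I \<Longrightarrow> f - g \<in> I"
  using ideal_add[of I f "- g"] ideal_uminus[of I g] by simp
lemma ideal_sum: "is_ideal I \<Longrightarrow> (\<And>x. x \<in> X \<Longrightarrow> F x \<in> I) \<Longrightarrow> sum F X \<in> I"
  by (induction X rule: infinite_finite_induct) (simp_all add: ideal_zero ideal_add)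

lemma m_ideal_ideal: "is_ideal m_ideal"
  unfolding m_ideal_def by (rule ideal_gen_ideal)

lemma yvar_in_m: "yvar t \<in> m_ideal"
  unfolding m_ideal_def by (rule subsetD[OF ideal_gen_sub]) simp

lemma xvar_in_m: "xvar (i, j) - (if i = j then aone else 0) \<in> m_ideal"
  unfolding m_ideal_def by (rule subsetD[OF ideal_gen_sub], rule UnI1) blast

definition evM :: "mono \<Rightarrow> complex" where
  "evM M = (if snd M = {||} \<and> (\<forall>v\<in>Poly_Mapping.keys (fst M). fst v = snd v) then 1 else 0)"

lemma inv_count_min: assumes "\<forall>u. u |\<in>| S \<longrightarrow> t < u" shows "inv_count {|t|} S = 0"
proof -
  have "{(s, u). s |\<in>| {|t|} \<and> u |\<in>| S \<and> u < s} = {}"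
  proof (rule equals0I)
    fix p assume "p \<in> {(s, u). s |\<in>| {|t|} \<and> u |\<in>| S \<and> u < s}"
    then obtain s u where "p = (s, u)" "s = t" "u |\<in>| S" "u < s" by blast
    thus False using assms less_asym by blast
  qed
  thus ?thesis unfolding inv_count_def by (metis card.empty)
qed

lemma mono_in_m_odd:
  assumes "S \<noteq> {||}" shows "monoA (m, S) \<in> m_ideal"
proof -
  define t where "t = fMin S"
  have tS: "t |\<in>| S" using assms unfolding t_def by (simp add: fMin_in)
  have lt: "\<forall>u. u |\<in>| S |-| {|t|} \<longrightarrow> t < u"
  proof (intro allI impI)
    fix u assume u: "u |\<in>| S |-| {|t|}"
    hence uS: "u |\<in>| S" "u \<noteq> t" by auto
    have "t \<le> u" unfolding t_def by (rule fMin_le[OF uS(1)])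
    thus "t < u" using order_le_neq_trans[OF \<open>t \<le> u\<close>] uS(2) by metis
  qed
  have un: "{|t|} |\<union>| (S |-| {|t|}) = S" using tS by auto
  have di: "{|t|} |\<inter>| (S |-| {|t|}) = {||}" by auto
  have eq: "amul (yvar t) (monoA (m, S |-| {|t|})) = monoA (m, S)"
    unfolding yvar_def monoA_def amul_single mono_sign_def mono_mul_def
    by (simp add: un di inv_count_min[OF lt] finsert_absorb[OF tS])
  show ?thesis using ideal_mul_right[OF m_ideal_ideal yvar_in_m[of t], of "monoA (m, S |-| {|t|})"] eq by simp
qed

lemma keys_add_single_nat: "Poly_Mapping.keys (m + Poly_Mapping.single v (1::nat)) = insert v (Poly_Mapping.keys m)"
  by (auto simp: in_keys_iff lookup_add lookup_single when_def split: if_splits)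

lemma mono_in_m_even:
  "\<And>m. (\<Sum>v\<in>Poly_Mapping.keys m. Poly_Mapping.lookup m v) = n \<Longrightarrow>
     monoA (m, {||}) - smul (evM (m, {||})) aone \<in> m_ideal"
proof (induction n)
  case 0
  hence "m = 0" by (metis (no_types, lifting) finite_keys in_keys_iff keys_eq_empty poly_mapping_eqI
       sum_eq_0_iff lookup_zero)
  thus ?case by (simp add: monoA_def evM_def aone_def ideal_zero[OF m_ideal_ideal])
next
  case (Suc n m)
  have "Poly_Mapping.keys m \<noteq> {}" using Suc.prems by (cases "Poly_Mapping.keys m = {}") auto
  then obtain v where v: "v \<in> Poly_Mapping.keys m" by blast
  define m' where "m' = m - Poly_Mapping.single v 1"
  have mm: "m = m' + Poly_Mapping.single v 1"
  proof (rule poly_mapping_eqI)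
    fix k show "Poly_Mapping.lookup m k = Poly_Mapping.lookup (m' + Poly_Mapping.single v 1) k"
      using v unfolding m'_def by (cases "k = v") (auto simp: lookup_add lookup_minus lookup_single in_keys_iff)
  qed
  have "(\<Sum>w\<in>Poly_Mapping.keys m. Poly_Mapping.lookup m w) = (\<Sum>w\<in>Poly_Mapping.keys m. Poly_Mapping.lookup m' w) + 1"
    unfolding mm keys_add_single_nat by (simp add: lookup_add lookup_single when_def sum.distrib)
  also have "(\<Sum>w\<in>Poly_Mapping.keys m. Poly_Mapping.lookup m' w) = (\<Sum>w\<in>Poly_Mapping.keys m'. Poly_Mapping.lookup m' w)"
    unfolding mm keys_add_single_nat by (rule sum.mono_neutral_right) (auto simp: in_keys_iff)
  finally have "(\<Sum>w\<in>Poly_Mapping.keys m'. Poly_Mapping.lookup m' w) = n" using Suc.prems by simp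
  note IH = Suc.IH[OF this]
  obtain i j where vij: "v = (i, j)" by force
  define d where "d = (if i = j then 1 else (0::complex))"
  define c where "c = evM (m', {||})"
  have ev: "evM (m, {||}) = c * d"
    unfolding c_def d_def evM_def mm keys_add_single_nat vij by (auto simp: keys_add_single_nat[simplified])
  have prod: "amul (monoA (m', {||})) (xvar v) = monoA (m, {||})"
    by (simp add: monoA_def xvar_def amul_single mono_mul_def mm)
  have gen: "xvar v - smul d aone \<in> m_ideal"
    using xvar_in_m[of i j] unfolding vij d_def by (cases "i = j") auto
  have "monoA (m, {||}) - smul (evM (m, {||})) aone =
        amul (monoA (m', {||})) (xvar v - smul d aone) + smul d (monoA (m', {||}) - smul c aone)"
    unfolding ev prod[symmetric] amul_minus_right amul_smul_right amul_one_right
    by (rule poly_mapping_eqI) (simp add: lookup_add lookup_minus algebra_simps)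
  also have "\<dots> \<in> m_ideal"
    by (intro ideal_add[OF m_ideal_ideal] ideal_mul_left[OF m_ideal_ideal] ideal_smul[OF m_ideal_ideal] gen IH[folded c_def])
  finally show ?case .
qed

lemma mono_in_m: "monoA M - smul (evM M) aone \<in> m_ideal"
proof -
  obtain m S where M: "M = (m, S)" by force
  show ?thesis
  proof (cases "S = {||}")
    case True
    thus ?thesis using mono_in_m_even M by blast
  next
    case False
    hence "evM M = 0" by (simp add: evM_def M)
    thus ?thesis using mono_in_m_odd[OF False] M by simp
  qed
qed

lemma minus_ev_in_m: "f - smul (lin evM f) aone \<in> m_ideal"
proof -
  have "f - smul (lin evM f) aone = (\<Sum>M\<in>Poly_Mapping.keys f. smul (Poly_Mapping.lookup f M) (monoA M - smul (evM M) aone))"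
  proof (rule poly_mapping_eqI)
    fix k
    have "(\<Sum>M\<in>Poly_Mapping.keys f. Poly_Mapping.lookup f M * Poly_Mapping.lookup (monoA M) k) = (\<Sum>M\<in>Poly_Mapping.keys f. if M = k then Poly_Mapping.lookup f M else 0)"
      by (rule sum.cong) (auto simp: monoA_def lookup_single)
    also have "\<dots> = Poly_Mapping.lookup f k" by (simp add: in_keys_iff)
    finally have "Poly_Mapping.lookup f k = (\<Sum>M\<in>Poly_Mapping.keys f. Poly_Mapping.lookup f M * Poly_Mapping.lookup (monoA M) k)" by simp
    thus "Poly_Mapping.lookup (f - smul (lin evM f) aone) k = Poly_Mapping.lookup (\<Sum>M\<in>Poly_Mapping.keys f. smul (Poly_Mapping.lookup f M) (monoA M - smul (evM M) aone)) k"
      by (simp add: lookup_minus lookup_sum lin_def algebra_simps sum_subtractf sum_distrib_right) (simp add: sum_distrib_left mult_ac)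
  qed
  also have "\<dots> \<in> m_ideal"
    by (intro ideal_sum[OF m_ideal_ideal] ideal_smul[OF m_ideal_ideal] mono_in_m)
  finally show ?thesis .
qed

lemma conclude:
  assumes I: "is_ideal I" and h: "h \<in> I" and nz: "lin evM h \<noteq> 0"
  shows "{f + g | f g. f \<in> I \<and> g \<in> m_ideal} = UNIV"
proof -
  define h0 where "h0 = smul (1 / lin evM h) h"
  have h0I: "h0 \<in> I" unfolding h0_def by (rule ideal_smul[OF I h])
  have ev1: "lin evM h0 = 1" unfolding h0_def using nz by simp
  have "aone - h0 \<in> m_ideal"
    using ideal_uminus[OF m_ideal_ideal minus_ev_in_m[of h0]] ev1 by simp
  have "z \<in> {f + g | f g. f \<in> I \<and> g \<in> m_ideal}" for z
  proof -
    have "z = amul z h0 + amul z (aone - h0)" by (simp add: amul_minus_right)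
    moreover have "amul z h0 \<in> I" by (rule ideal_mul_left[OF I h0I])
    moreover have "amul z (aone - h0) \<in> m_ideal" by (rule ideal_mul_left[OF m_ideal_ideal \<open>aone - h0 \<in> m_ideal\<close>])
    ultimately show ?thesis by blast
  qed
  thus ?thesis by blast
qed




section \<open>falling factorials and the functionals Phi\<close>

definition ff :: "nat \<Rightarrow> nat \<Rightarrow> nat" where "ff n a = (\<Prod>i<a. (n - i))"

lemma ff_0[simp]: "ff n 0 = 1" by (simp add: ff_def)
lemma ff_Suc: "ff n (Suc a) = ff n a * (n - a)" by (simp add: ff_def)
lemma ff_Suc_Suc: "ff (Suc n) (Suc a) = Suc n * ff n a"
  unfolding ff_def by (subst prod.lessThan_Suc_shift) simp
lemma ff_zero_big: "n < a \<Longrightarrow> ff n a = 0"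
  unfolding ff_def by (rule prod_zero) auto
lemma ff_pascal: "ff (Suc n) a = ff n a + a * ff n (a - 1)"
proof (cases a)
  case 0 thus ?thesis by simp
next
  case (Suc b)
  show ?thesis
  proof (cases "b \<le> n")
    case True
    have "ff (Suc n) a = Suc n * ff n b" by (simp add: Suc ff_Suc_Suc)
    also have "\<dots> = ff n b * (n - b) + Suc b * ff n b" using True by (simp add: algebra_simps)
    finally show ?thesis by (simp add: Suc ff_Suc)
  next
    case False
    thus ?thesis by (simp add: Suc ff_Suc_Suc ff_zero_big ff_Suc)
  qed
qed
lemma ff_self_nz: "ff n n \<noteq> 0"
  unfolding ff_def by auto

definition psi :: "idx \<Rightarrow> nat \<Rightarrow> nat \<Rightarrow> complex" where
  "psi v a n = (if fst v = snd v then of_nat (ff n a) else if a = n then of_nat (fact n) else 0)"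

lemma psi_00[simp]: "psi v 0 0 = 1" by (simp add: psi_def)

lemma psi_pascal: "psi v a (Suc n) = (if fst v = snd v then psi v a n else 0) + of_nat a * psi v (a - 1) n"
  unfolding psi_def
  by (cases "fst v = snd v") (auto simp: ff_pascal, cases a, auto simp: algebra_simps)

lemma psi_shift: "of_nat n * psi v a (n - 1) = psi v (Suc a) n"
proof (cases n)
  case 0 thus ?thesis by (simp add: psi_def ff_Suc)
next
  case (Suc k) thus ?thesis by (simp add: psi_def ff_Suc_Suc fact_Suc algebra_simps)
qed

lemma psi_nz_le: "psi v a n \<noteq> 0 \<Longrightarrow> a \<le> n"
  unfolding psi_def using ff_zero_big[of n a] by (cases "fst v = snd v"; cases "a \<le> n") (auto split: if_splits)

lemma psi_self_nz: "psi v n n \<noteq> 0"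
  unfolding psi_def using ff_self_nz by auto

definition phx :: "(idx \<Rightarrow>\<^sub>0 nat) \<Rightarrow> (idx \<Rightarrow>\<^sub>0 nat) \<Rightarrow> complex" where
  "phx al m = (\<Prod>v\<in>Poly_Mapping.keys al \<union> Poly_Mapping.keys m. psi v (Poly_Mapping.lookup al v) (Poly_Mapping.lookup m v))"

lemma phx_superset: "finite K \<Longrightarrow> Poly_Mapping.keys al \<union> Poly_Mapping.keys m \<subseteq> K \<Longrightarrow>
   phx al m = (\<Prod>v\<in>K. psi v (Poly_Mapping.lookup al v) (Poly_Mapping.lookup m v))"
  unfolding phx_def by (rule prod.mono_neutral_left) (auto simp: in_keys_iff)

definition e :: "idx \<Rightarrow> idx \<Rightarrow>\<^sub>0 nat" where "e v = Poly_Mapping.single v 1"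

lemma keys_minus_nat: "Poly_Mapping.keys (a - b) \<subseteq> Poly_Mapping.keys (a::idx \<Rightarrow>\<^sub>0 nat)"
  by (auto simp: in_keys_iff lookup_minus)

lemma keys_plus_nat: "Poly_Mapping.keys (a + b) \<subseteq> Poly_Mapping.keys (a::idx \<Rightarrow>\<^sub>0 nat) \<union> Poly_Mapping.keys b"
  by (rule keys_add)

lemma keys_e[simp]: "Poly_Mapping.keys (e w) = {w}"
  by (simp add: e_def)

lemma lookup_e: "Poly_Mapping.lookup (e w) v = (if w = v then 1 else 0)"
  by (simp add: lookup_single e_def)

lemma phx_split:
  assumes "finite K" "Poly_Mapping.keys al \<union> Poly_Mapping.keys m \<subseteq> K" "w \<in> K"
  shows "phx al m = psi w (Poly_Mapping.lookup al w) (Poly_Mapping.lookup m w) *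
     (\<Prod>v\<in>K - {w}. psi v (Poly_Mapping.lookup al v) (Poly_Mapping.lookup m v))"
  using phx_superset[OF assms(1,2)] prod.remove[OF assms(1,3)] by simp

lemma phx_pascal:
  "phx al (m + e w) = (if fst w = snd w then phx al m else 0) + of_nat (Poly_Mapping.lookup al w) * phx (al - e w) m"
proof -
  define K where "K = Poly_Mapping.keys al \<union> Poly_Mapping.keys m \<union> {w}"
  have fK: "finite K" unfolding K_def by simp
  have wK: "w \<in> K" unfolding K_def by simp
  have k1: "Poly_Mapping.keys al \<union> Poly_Mapping.keys (m + e w) \<subseteq> K"
    using keys_plus_nat[of m "e w"] unfolding K_def by auto
  have k2: "Poly_Mapping.keys al \<union> Poly_Mapping.keys m \<subseteq> K" unfolding K_def by auto
  have k3: "Poly_Mapping.keys (al - e w) \<union> Poly_Mapping.keys m \<subseteq> K"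
    using keys_minus_nat[of al "e w"] unfolding K_def by auto
  define R where "R = (\<Prod>v\<in>K - {w}. psi v (Poly_Mapping.lookup al v) (Poly_Mapping.lookup m v))"
  have R1: "(\<Prod>v\<in>K - {w}. psi v (Poly_Mapping.lookup al v) (Poly_Mapping.lookup (m + e w) v)) = R"
    unfolding R_def by (rule prod.cong) (auto simp: lookup_add lookup_e)
  have R3: "(\<Prod>v\<in>K - {w}. psi v (Poly_Mapping.lookup (al - e w) v) (Poly_Mapping.lookup m v)) = R"
    unfolding R_def by (rule prod.cong) (auto simp: lookup_minus lookup_e)
  show ?thesis
    unfolding phx_split[OF fK k1 wK] phx_split[OF fK k2 wK] phx_split[OF fK k3 wK] R1 R3 R_def[symmetric]
    by (simp add: lookup_add lookup_minus lookup_e psi_pascal algebra_simps)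
qed

lemma phx_shift:
  "of_nat (Poly_Mapping.lookup m w) * phx al (m - e w) = phx (al + e w) m"
proof -
  define K where "K = Poly_Mapping.keys al \<union> Poly_Mapping.keys m \<union> {w}"
  have fK: "finite K" unfolding K_def by simp
  have wK: "w \<in> K" unfolding K_def by simp
  have k1: "Poly_Mapping.keys al \<union> Poly_Mapping.keys (m - e w) \<subseteq> K"
    using keys_minus_nat[of m "e w"] unfolding K_def by auto
  have k2: "Poly_Mapping.keys (al + e w) \<union> Poly_Mapping.keys m \<subseteq> K"
    using keys_plus_nat[of al "e w"] unfolding K_def by auto
  define R where "R = (\<Prod>v\<in>K - {w}. psi v (Poly_Mapping.lookup al v) (Poly_Mapping.lookup m v))"
  have R1: "(\<Prod>v\<in>K - {w}. psi v (Poly_Mapping.lookup al v) (Poly_Mapping.lookup (m - e w) v)) = R"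
    unfolding R_def by (rule prod.cong) (auto simp: lookup_minus lookup_e)
  have R2: "(\<Prod>v\<in>K - {w}. psi v (Poly_Mapping.lookup (al + e w) v) (Poly_Mapping.lookup m v)) = R"
    unfolding R_def by (rule prod.cong) (auto simp: lookup_add lookup_e)
  show ?thesis
    unfolding phx_split[OF fK k1 wK] phx_split[OF fK k2 wK] R1 R2
    by (simp add: lookup_add lookup_minus lookup_e psi_shift[symmetric] algebra_simps)
qed

lemma phx_nz_le: "phx al m \<noteq> 0 \<Longrightarrow> Poly_Mapping.lookup al v \<le> Poly_Mapping.lookup m v"
proof -
  assume nz: "phx al m \<noteq> 0"
  define K where "K = Poly_Mapping.keys al \<union> Poly_Mapping.keys m \<union> {v}"
  have fK: "finite K" unfolding K_def by simp
  have wK: "v \<in> K" unfolding K_def by simp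
  have k: "Poly_Mapping.keys al \<union> Poly_Mapping.keys m \<subseteq> K" unfolding K_def by auto
  from nz have "psi v (Poly_Mapping.lookup al v) (Poly_Mapping.lookup m v) \<noteq> 0"
    unfolding phx_split[OF fK k wK] by auto
  thus ?thesis by (rule psi_nz_le)
qed

lemma phx_self_nz: "phx m m \<noteq> 0"
  unfolding phx_def by (simp add: psi_self_nz)

lemma phx_zero_left: "phx 0 m = (if \<forall>v\<in>Poly_Mapping.keys m. fst v = snd v then 1 else 0)"
proof -
  have "phx 0 m = (\<Prod>v\<in>Poly_Mapping.keys m. psi v 0 (Poly_Mapping.lookup m v))"
    unfolding phx_def by simp
  also have "\<dots> = (\<Prod>v\<in>Poly_Mapping.keys m. if fst v = snd v then 1 else 0)"
    by (rule prod.cong) (auto simp: psi_def ff_def in_keys_iff)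
  also have "\<dots> = (if \<forall>v\<in>Poly_Mapping.keys m. fst v = snd v then 1 else 0)"
    by (auto simp: prod_zero_iff)
  finally show ?thesis .
qed

definition Phi :: "mono \<Rightarrow> mono \<Rightarrow> complex" where
  "Phi B M = (if snd M = snd B then phx (fst B) (fst M) else 0)"

lemma Phi_ev: "Phi (0, {||}) = evM"
  by (rule ext) (simp add: Phi_def evM_def phx_zero_left)


definition degm :: "(idx \<Rightarrow>\<^sub>0 nat) \<Rightarrow> nat" where
  "degm m = (\<Sum>v\<in>Poly_Mapping.keys m. Poly_Mapping.lookup m v)"

lemma degm_superset: "finite K \<Longrightarrow> Poly_Mapping.keys m \<subseteq> K \<Longrightarrow> degm m = (\<Sum>v\<in>K. Poly_Mapping.lookup m v)"
  unfolding degm_def by (rule sum.mono_neutral_left) (auto simp: in_keys_iff)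

lemma le_deg_eq:
  assumes le: "\<And>v. Poly_Mapping.lookup a v \<le> Poly_Mapping.lookup b v" and d: "degm b \<le> degm a"
  shows "a = b"
proof -
  define K where "K = Poly_Mapping.keys a \<union> Poly_Mapping.keys b"
  have fK: "finite K" unfolding K_def by simp
  have da: "degm a = (\<Sum>v\<in>K. Poly_Mapping.lookup a v)" by (rule degm_superset[OF fK]) (auto simp: K_def)
  have db: "degm b = (\<Sum>v\<in>K. Poly_Mapping.lookup b v)" by (rule degm_superset[OF fK]) (auto simp: K_def)
  have "(\<Sum>v\<in>K. Poly_Mapping.lookup b v - Poly_Mapping.lookup a v) = degm b - degm a"
    unfolding da db by (rule sum_subtractf_nat) (use le in auto)
  also have "\<dots> = 0" using d by simp
  finally have z: "\<forall>v\<in>K. Poly_Mapping.lookup b v - Poly_Mapping.lookup a v = 0" using fK by simp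
  show ?thesis
  proof (rule poly_mapping_eqI)
    fix v show "Poly_Mapping.lookup a v = Poly_Mapping.lookup b v"
    proof (cases "v \<in> K")
      case True thus ?thesis using z le[of v] by force
    next
      case False thus ?thesis unfolding K_def by (simp add: in_keys_iff)
    qed
  qed
qed

lemma exists_nonzero_Phi:
  assumes "h \<noteq> 0" shows "\<exists>B. lin (Phi B) h \<noteq> 0"
proof -
  let ?D = "(\<lambda>M. degm (fst M)) ` Poly_Mapping.keys h"
  have ne: "Poly_Mapping.keys h \<noteq> {}" using assms by simp
  have fD: "finite ?D" by simp
  have "Max ?D \<in> ?D" using ne fD by (intro Max_in) auto
  then obtain M0 where M0: "M0 \<in> Poly_Mapping.keys h" "degm (fst M0) = Max ?D" by auto
  have maxd: "degm (fst M) \<le> degm (fst M0)" if "M \<in> Poly_Mapping.keys h" for M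
    unfolding M0(2) using that fD by (intro Max_ge) auto
  have other: "Poly_Mapping.lookup h M * Phi M0 M = 0" if "M \<in> Poly_Mapping.keys h - {M0}" for M
  proof (rule ccontr)
    assume "Poly_Mapping.lookup h M * Phi M0 M \<noteq> 0"
    hence ph: "Phi M0 M \<noteq> 0" by auto
    hence sn: "snd M = snd M0" and px: "phx (fst M0) (fst M) \<noteq> 0" unfolding Phi_def by (auto split: if_splits)
    have "fst M0 = fst M"
      by (rule le_deg_eq) (use phx_nz_le[OF px] maxd that in auto)
    hence "M = M0" using sn by (simp add: prod_eq_iff)
    thus False using that by simp
  qed
  have "lin (Phi M0) h = Poly_Mapping.lookup h M0 * Phi M0 M0 + (\<Sum>M\<in>Poly_Mapping.keys h - {M0}. Poly_Mapping.lookup h M * Phi M0 M)"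
    unfolding lin_def by (rule sum.remove) (use M0 in auto)
  also have "\<dots> = Poly_Mapping.lookup h M0 * Phi M0 M0" using sum.neutral[of "Poly_Mapping.keys h - {M0}", OF ballI[OF other]] by simp
  also have "\<dots> \<noteq> 0" using M0(1) phx_self_nz by (simp add: Phi_def in_keys_iff)
  finally show ?thesis by blast
qed




section \<open>Computing the action of special elements\<close>

lemma U_to_A_at:
  assumes "\<And>ij. ij \<noteq> p \<Longrightarrow> t (False, fst ij, False, snd ij) = 0 \<and> t (False, fst ij, True, snd ij) = 0"
  shows "U_to_A zeta t = smul (t (False, fst p, False, snd p) / (1+zeta)) (xvar p)
                        + smul (t (False, fst p, True, snd p) / (1+zeta)) (yvar p)"
proof -
  define c where "c = (\<lambda>(i,j). t (False, i, False, j) / (1 + zeta))"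
  define d where "d = (\<lambda>(i,j). t (False, i, True, j) / (1 + zeta))"
  have U: "U_to_A zeta t = (\<Sum>ij \<in> {ij. c ij \<noteq> 0 \<or> d ij \<noteq> 0}. smul (c ij) (xvar ij) + smul (d ij) (yvar ij))"
    unfolding U_to_A_def c_def d_def Let_def by simp
  have sub: "{ij. c ij \<noteq> 0 \<or> d ij \<noteq> 0} \<subseteq> {p}"
  proof
    fix ij assume "ij \<in> {ij. c ij \<noteq> 0 \<or> d ij \<noteq> 0}"
    thus "ij \<in> {p}" using assms[of ij] unfolding c_def d_def by (cases ij) auto
  qed
  have "(\<Sum>ij \<in> {ij. c ij \<noteq> 0 \<or> d ij \<noteq> 0}. smul (c ij) (xvar ij) + smul (d ij) (yvar ij))
       = (\<Sum>ij \<in> {p}. smul (c ij) (xvar ij) + smul (d ij) (yvar ij))"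
    by (rule sum.mono_neutral_left) (use sub in auto)
  thus ?thesis unfolding U by (simp add: c_def d_def split_def)
qed

lemma matq_simp: "matq (a, b) (R, i) (P, k) = (if R = P then Poly_Mapping.lookup a (i, k) else if P then Poly_Mapping.lookup b (i, k) else - Poly_Mapping.lookup b (i, k))"
  by (simp add: matq_def)

lemma tcoef_simp: "tcoef p X Y (P, k, Q, l) (R, i, S, j) =
     (if S = Q \<and> j = l then matq X (R, i) (P, k) else 0) +
     (if R = P \<and> i = k then (if p \<and> P then -1 else 1) * matq Y (S, j) (Q, l) else 0)"
  by (simp add: tcoef_def)

lemma zeta_facts: assumes "zeta ^ 2 = (-1::complex)" shows "1 + zeta \<noteq> 0" "1 - zeta \<noteq> 0"
proof -
  show "1 + zeta \<noteq> 0"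
  proof
    assume "1 + zeta = 0" hence "zeta = -1" by (simp add: add_eq_0_iff)
    thus False using assms by simp
  qed
  show "1 - zeta \<noteq> 0"
  proof
    assume "1 - zeta = 0" hence "zeta = 1" by simp
    thus False using assms by simp
  qed
qed

definition gxL :: "nat \<Rightarrow> nat \<Rightarrow> idx \<Rightarrow> A" where "gxL k l v = (if fst v = k then xvar (l, snd v) else 0)"
definition gyL :: "nat \<Rightarrow> nat \<Rightarrow> idx \<Rightarrow> A" where "gyL k l v = (if fst v = k then yvar (l, snd v) else 0)"
definition gxO :: "complex \<Rightarrow> nat \<Rightarrow> nat \<Rightarrow> idx \<Rightarrow> A" where "gxO c k l v = (if fst v = k then smul c (yvar (l, snd v)) else 0)"
definition gyO :: "complex \<Rightarrow> nat \<Rightarrow> nat \<Rightarrow> idx \<Rightarrow> A" where "gyO c k l v = (if fst v = k then smul c (xvar (l, snd v)) else 0)"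

lemma der_zero: "der p (\<lambda>_. 0) (\<lambda>_. 0) f = 0"
  unfolding der_def der_mono_def by (simp add: split_def)

lemma U_zero: "U_to_A zeta (\<lambda>_. 0) = 0"
  by (simp add: U_to_A_def)

lemma act_hom_zero: "act_hom zeta p (0, 0) (0, 0) f = 0"
proof -
  have v0: "vimg zeta p (0, 0) (0, 0) kl t = 0 \<and> wimg zeta p (0, 0) (0, 0) kl t = 0" for kl t
  proof -
    obtain k' l' where kl: "kl = (k', l')" by force
    obtain R i S j where t: "t = (R, i, S, j)" by (cases t) auto
    show ?thesis unfolding kl t by (simp add: vimg_def wimg_def tcoef_simp matq_simp)
  qed
  have "vimg zeta p (0, 0) (0, 0) kl = (\<lambda>_. 0)" "wimg zeta p (0, 0) (0, 0) kl = (\<lambda>_. 0)" for kl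
    using v0[of kl] by (auto intro!: ext simp del: split_paired_All)
  thus ?thesis unfolding act_hom_def by (simp add: U_zero der_zero)
qed

lemma act_L:
  assumes z: "zeta ^ 2 = -1"
  shows "act zeta ((Poly_Mapping.single (l, k) 1, 0), (0, 0)) f = der False (gxL k l) (gyL k l) f"
proof -
  have nz: "1 + zeta \<noteq> 0" using zeta_facts[OF z] by simp
  have gx: "U_to_A zeta (vimg zeta False (Poly_Mapping.single (l, k) 1, 0) (0, 0) kl) = gxL k l kl" for kl
  proof -
    obtain k' l' where kl: "kl = (k', l')" by force
    show ?thesis unfolding kl
      by (subst U_to_A_at[where p = "(l, l')"])
         (auto simp: vimg_def tcoef_simp matq_simp lookup_single when_def gxL_def nz)
  qed
  have gy: "U_to_A zeta (wimg zeta False (Poly_Mapping.single (l, k) 1, 0) (0, 0) kl) = gyL k l kl" for kl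
  proof -
    obtain k' l' where kl: "kl = (k', l')" by force
    show ?thesis unfolding kl
      by (subst U_to_A_at[where p = "(l, l')"])
         (auto simp: wimg_def tcoef_simp matq_simp lookup_single when_def gyL_def nz)
  qed
  show ?thesis
    unfolding act_def by (simp add: act_hom_zero, simp add: act_hom_def gx gy)
qed

lemma act_O:
  assumes z: "zeta ^ 2 = -1"
  shows "act zeta ((0, Poly_Mapping.single (l, k) 1), (0, 0)) f = der True (gxO ((1 - zeta) / (1 + zeta)) k l) (gyO ((1 - zeta) / (1 + zeta)) k l) f"
proof -
  have nz: "1 + zeta \<noteq> 0" using zeta_facts[OF z] by simp
  have gx: "U_to_A zeta (vimg zeta True (0, Poly_Mapping.single (l, k) 1) (0, 0) kl) = gxO ((1 - zeta) / (1 + zeta)) k l kl" for kl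
  proof -
    obtain k' l' where kl: "kl = (k', l')" by force
    show ?thesis unfolding kl
      by (subst U_to_A_at[where p = "(l, l')"])
         (auto simp: vimg_def tcoef_simp matq_simp lookup_single when_def gxO_def nz)
  qed
  have gy: "U_to_A zeta (wimg zeta True (0, Poly_Mapping.single (l, k) 1) (0, 0) kl) = gyO ((1 - zeta) / (1 + zeta)) k l kl" for kl
  proof -
    obtain k' l' where kl: "kl = (k', l')" by force
    show ?thesis unfolding kl
      by (subst U_to_A_at[where p = "(l, l')"])
         (auto simp: wimg_def tcoef_simp matq_simp lookup_single when_def gyO_def nz)
  qed
  show ?thesis
    unfolding act_def by (simp add: act_hom_zero, simp add: act_hom_def gx gy)
qed




lemma lin_der: "lin w (der p gx gy f) = (\<Sum>M\<in>Poly_Mapping.keys f. Poly_Mapping.lookup f M * lin w (der_mono p gx gy M))"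
  unfolding der_def by (simp add: lin_sum)

definition sg :: "idx fset \<Rightarrow> idx fset \<Rightarrow> complex" where
  "sg S T = (if S |\<inter>| T = {||} then (-1) ^ inv_count S T else 0)"

lemma mono_sign_sg: "mono_sign M N = sg (snd M) (snd N)"
  by (simp add: mono_sign_def sg_def)

lemma amul_mono: "amul (Poly_Mapping.single (m1, S1) a) (Poly_Mapping.single (m2, S2) b) =
   Poly_Mapping.single (m1 + m2, S1 |\<union>| S2) (a * b * sg S1 S2)"
  by (simp add: amul_single mono_mul_def mono_sign_sg)

lemma sg_empty[simp]: "sg {||} T = 1" "sg T {||} = 1"
  by (simp_all add: sg_def inv_count_def)

lemma Phi_simp: "Phi (al, T) (m, S) = (if S = T then phx al m else 0)"
  by (simp add: Phi_def)

lemma phx_zero_if_big: "1 \<le> Poly_Mapping.lookup al v \<Longrightarrow> Poly_Mapping.lookup m v = 0 \<Longrightarrow> phx al m = 0"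
  using phx_nz_le[of al m v] by auto

lemma key_even_term:
  "of_nat (Poly_Mapping.lookup m v) * phx al (m - e v + e (l, snd v)) =
     (if snd v = l then phx (al + e v) m else 0) +
     of_nat (Poly_Mapping.lookup al (l, snd v)) * phx (al - e (l, snd v) + e v) m"
proof -
  have a: "of_nat (Poly_Mapping.lookup m v) * phx al (m - e v) = phx (al + e v) m" by (rule phx_shift)
  have b: "of_nat (Poly_Mapping.lookup m v) * phx (al - e (l, snd v)) (m - e v) = phx (al - e (l, snd v) + e v) m" by (rule phx_shift)
  show ?thesis unfolding phx_pascal
    by (simp add: distrib_left a b mult.left_commute[of "of_nat (Poly_Mapping.lookup m v)"])
qed

lemma key_even:
  fixes al m :: "idx \<Rightarrow>\<^sub>0 nat" and k l :: nat
  defines "V0 \<equiv> (\<lambda>j. (k, j)) ` {j. (l, j) \<in> Poly_Mapping.keys al}"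
  shows "lin (Phi (al, {||})) (der_mono False (gxL k l) (gyL k l) (m, S)) =
     Phi (al + e (k, l), {||}) (m, S) +
     (\<Sum>v\<in>V0. of_nat (Poly_Mapping.lookup al (l, snd v)) * Phi (al - e (l, snd v) + e v, {||}) (m, S))"
proof -
  define s where "s = sorted_list_of_fset S"
  have dm: "der_mono False (gxL k l) (gyL k l) (m, S) =
     (\<Sum>v \<in> Poly_Mapping.keys m. smul (of_nat (Poly_Mapping.lookup m v))
         (amul (monoA (m - e v, {||})) (amul (gxL k l v) (monoA (0, S))))) +
     (\<Sum>i < length s. smul 1
         (amul (monoA (m, fset_of_list (take i s)))
               (amul (gyL k l (s ! i)) (monoA (0, fset_of_list (drop (Suc i) s))))))"
    unfolding der_mono_def s_def Let_def by (simp add: e_def)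
  have Y: "lin (Phi (al, {||})) (amul (monoA (m, fset_of_list (take i s)))
               (amul (gyL k l (s ! i)) (monoA (0, fset_of_list (drop (Suc i) s))))) = 0" for i
    by (simp add: gyL_def yvar_def monoA_def amul_mono Phi_simp)
  have X: "lin (Phi (al, {||})) (amul (monoA (m - e v, {||})) (amul (gxL k l v) (monoA (0, S)))) =
     (if fst v = k \<and> S = {||} then phx al (m - e v + e (l, snd v)) else 0)" for v
    by (simp add: gxL_def xvar_def monoA_def amul_mono Phi_simp e_def)
  have lhs: "lin (Phi (al, {||})) (der_mono False (gxL k l) (gyL k l) (m, S)) =
     (\<Sum>v \<in> Poly_Mapping.keys m. of_nat (Poly_Mapping.lookup m v) *
        (if fst v = k \<and> S = {||} then phx al (m - e v + e (l, snd v)) else 0))"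
    unfolding dm lin_add lin_sum lin_smul X Y by simp
  show ?thesis
  proof (cases "S = {||}")
    case False
    thus ?thesis unfolding lhs by (simp add: Phi_simp)
  next
    case True
    define F1 where "F1 v = (if snd v = l then phx (al + e v) m else 0)" for v
    define F2 where "F2 v = of_nat (Poly_Mapping.lookup al (l, snd v)) * phx (al - e (l, snd v) + e v) m" for v
    define U where "U = {v \<in> Poly_Mapping.keys m. fst v = k} \<union> V0 \<union> {(k, l)}"
    have fV0: "finite V0" unfolding V0_def by (rule finite_imageI) (rule finite_subset[of _ "snd ` Poly_Mapping.keys al"], force, simp)
    have fU: "finite U" unfolding U_def using fV0 by simp
    have zero_out: "F1 v + F2 v = 0" if "fst v = k" "v \<notin> Poly_Mapping.keys m" for v
    proof -
      have mv: "Poly_Mapping.lookup m v = 0" using that by (simp add: in_keys_iff)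
      have "F1 v = 0" unfolding F1_def using phx_zero_if_big[OF _ mv, of "al + e v"] by (simp add: lookup_add lookup_e)
      moreover have "F2 v = 0"
      proof (cases "Poly_Mapping.lookup al (l, snd v) = 0")
        case True thus ?thesis by (simp add: F2_def)
      next
        case False
        have "1 \<le> Poly_Mapping.lookup (al - e (l, snd v) + e v) v"
          using False by (auto simp: lookup_add lookup_minus lookup_e)
        thus ?thesis unfolding F2_def using phx_zero_if_big[OF _ mv] by simp
      qed
      ultimately show ?thesis by simp
    qed
    have "(\<Sum>v \<in> Poly_Mapping.keys m. of_nat (Poly_Mapping.lookup m v) *
        (if fst v = k \<and> S = {||} then phx al (m - e v + e (l, snd v)) else 0))
        = (\<Sum>v \<in> Poly_Mapping.keys m. if fst v = k then F1 v + F2 v else 0)"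
      by (rule sum.cong) (auto simp: True F1_def F2_def key_even_term)
    also have "\<dots> = (\<Sum>v \<in> {v \<in> Poly_Mapping.keys m. fst v = k}. F1 v + F2 v)"
      by (simp add: sum.inter_filter)
    also have "\<dots> = (\<Sum>v \<in> U. F1 v + F2 v)"
    proof (rule sum.mono_neutral_left[OF fU])
      show "{v \<in> Poly_Mapping.keys m. fst v = k} \<subseteq> U" by (auto simp: U_def)
      show "\<forall>i\<in>U - {v \<in> Poly_Mapping.keys m. fst v = k}. F1 i + F2 i = 0"
      proof
        fix i assume "i \<in> U - {v \<in> Poly_Mapping.keys m. fst v = k}"
        hence "fst i = k" "i \<notin> Poly_Mapping.keys m" by (auto simp: U_def V0_def)
        thus "F1 i + F2 i = 0" by (rule zero_out)
      qed
    qed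
    also have "\<dots> = (\<Sum>v \<in> U. F1 v) + (\<Sum>v \<in> U. F2 v)" by (rule sum.distrib)
    also have "(\<Sum>v \<in> U. F1 v) = F1 (k, l)"
    proof -
      have "(\<Sum>v \<in> U. F1 v) = F1 (k, l) + (\<Sum>v \<in> U - {(k, l)}. F1 v)"
        by (rule sum.remove) (use fU in \<open>auto simp: U_def\<close>)
      moreover have "(\<Sum>v \<in> U - {(k, l)}. F1 v) = 0"
        by (rule sum.neutral) (auto simp: U_def V0_def F1_def)
      ultimately show ?thesis by simp
    qed
    also have "(\<Sum>v \<in> U. F2 v) = (\<Sum>v \<in> V0. F2 v)"
      by (rule sum.mono_neutral_right) (use fU in \<open>auto simp: U_def V0_def F2_def in_keys_iff\<close>)
    finally show ?thesis unfolding lhs using True by (simp add: Phi_simp F1_def F2_def)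
  qed
qed


lemma distinct_slist: "distinct (sorted_list_of_fset S)"
  by (simp add: sorted_list_of_fset.rep_eq)

lemma slist_facts:
  fixes S :: "idx fset"
  assumes i: "i < length (sorted_list_of_fset S)"
  shows "sorted_list_of_fset S ! i |\<in>| S"
    "fset_of_list (take i (sorted_list_of_fset S)) |\<union>| fset_of_list (drop (Suc i) (sorted_list_of_fset S)) = S |-| {|sorted_list_of_fset S ! i|}"
    "fset_of_list (take i (sorted_list_of_fset S)) |\<inter>| fset_of_list (drop (Suc i) (sorted_list_of_fset S)) = {||}"
proof -
  define s where "s = sorted_list_of_fset S"
  have d: "distinct s" unfolding s_def by (rule distinct_slist)
  have iS: "i < length s" using i unfolding s_def .
  have dec: "s = take i s @ s ! i # drop (Suc i) s" by (rule id_take_nth_drop[OF iS])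
  have ss: "set s = fset S" unfolding s_def by simp
  have "distinct (take i s @ s ! i # drop (Suc i) s)" using d dec by simp
  hence n1: "s ! i \<notin> set (take i s)" and n2: "s ! i \<notin> set (drop (Suc i) s)"
    and dj: "set (take i s) \<inter> set (drop (Suc i) s) = {}" by auto
  have un: "set s = set (take i s) \<union> {s ! i} \<union> set (drop (Suc i) s)"
    by (subst dec) auto
  show "sorted_list_of_fset S ! i |\<in>| S"
    using iS ss unfolding s_def[symmetric] by (metis nth_mem)
  show "fset_of_list (take i (sorted_list_of_fset S)) |\<union>| fset_of_list (drop (Suc i) (sorted_list_of_fset S)) = S |-| {|sorted_list_of_fset S ! i|}"
    unfolding s_def[symmetric]
  proof (rule fset_eqI)
    fix x show "(x |\<in>| fset_of_list (take i s) |\<union>| fset_of_list (drop (Suc i) s)) = (x |\<in>| S |-| {|s ! i|})"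
      using un n1 n2 ss by (auto simp: fset_of_list_elem)
  qed
  show "fset_of_list (take i (sorted_list_of_fset S)) |\<inter>| fset_of_list (drop (Suc i) (sorted_list_of_fset S)) = {||}"
    unfolding s_def[symmetric]
  proof (rule fset_eqI)
    fix x show "(x |\<in>| fset_of_list (take i s) |\<inter>| fset_of_list (drop (Suc i) s)) = (x |\<in>| {||})"
      using dj by (auto simp: fset_of_list_elem)
  qed
qed

lemma xvar_e: "xvar w = Poly_Mapping.single (e w, {||}) 1"
  by (simp add: xvar_def e_def)


definition Gt :: "complex \<Rightarrow> idx fset \<Rightarrow> idx \<Rightarrow> complex" where
  "Gt c S t = (\<Sum>i<length (sorted_list_of_fset S). if sorted_list_of_fset S ! i = t then
      (-1) ^ i * c * sg (fset_of_list (take i (sorted_list_of_fset S))) (fset_of_list (drop (Suc i) (sorted_list_of_fset S))) else 0)"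

lemma sg_nz_disj: "sg A B \<noteq> 0 \<Longrightarrow> A |\<inter>| B = {||}"
  by (simp add: sg_def split: if_splits)

lemma key_odd:
  fixes al m :: "idx \<Rightarrow>\<^sub>0 nat" and k l :: nat and c :: complex and T S :: "idx fset"
  assumes t0: "(k, l) |\<notin>| T"
  defines "V2 \<equiv> (\<lambda>u. (k, snd u)) ` {u. u |\<in>| T \<and> fst u = l}"
  and "Tk \<equiv> (\<lambda>j. (k, j)) ` {j. (l, j) \<in> Poly_Mapping.keys al \<and> (k, j) |\<notin>| T}"
  shows "lin (Phi (al, T)) (der_mono True (gxO c k l) (gyO c k l) (m, S)) =
     Gt c (finsert (k, l) T) (k, l) * Phi (al, finsert (k, l) T) (m, S)
   + (\<Sum>v\<in>V2. c * sg {|(l, snd v)|} (T |-| {|(l, snd v)|}) * Phi (al + e v, T |-| {|(l, snd v)|}) (m, S))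
   + (\<Sum>t\<in>Tk. Gt c (finsert t T) t * of_nat (Poly_Mapping.lookup al (l, snd t)) * Phi (al - e (l, snd t), finsert t T) (m, S))"
proof -
  define s where "s = sorted_list_of_fset S"
  define A where "A i = fset_of_list (take i s)" for i
  define B where "B i = fset_of_list (drop (Suc i) s)" for i
  define g where "g i = (-1) ^ i * c * sg (A i) (B i)" for i
  have dm: "der_mono True (gxO c k l) (gyO c k l) (m, S) =
     (\<Sum>v \<in> Poly_Mapping.keys m. smul (of_nat (Poly_Mapping.lookup m v))
         (amul (monoA (m - e v, {||})) (amul (gxO c k l v) (monoA (0, S))))) +
     (\<Sum>i < length s. smul ((-1) ^ i)
         (amul (monoA (m, A i)) (amul (gyO c k l (s ! i)) (monoA (0, B i)))))"
    unfolding der_mono_def s_def A_def B_def Let_def by (simp add: e_def)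
  have X: "lin (Phi (al, T)) (amul (monoA (m - e v, {||})) (amul (gxO c k l v) (monoA (0, S)))) =
     (if fst v = k \<and> finsert (l, snd v) S = T then c * sg {|(l, snd v)|} S * phx al (m - e v) else 0)" for v
    by (simp add: gxO_def yvar_def monoA_def amul_mono Phi_simp amul_smul_left)
  have Y: "lin (Phi (al, T)) (amul (monoA (m, A i)) (amul (gyO c k l (s ! i)) (monoA (0, B i)))) =
     (if fst (s ! i) = k \<and> A i |\<union>| B i = T then c * sg (A i) (B i) * phx al (m + e (l, snd (s ! i))) else 0)" for i
    by (simp add: gyO_def xvar_e monoA_def amul_mono Phi_simp amul_smul_left amul_smul_right)
  have lhs: "lin (Phi (al, T)) (der_mono True (gxO c k l) (gyO c k l) (m, S)) =
     (\<Sum>v \<in> Poly_Mapping.keys m. of_nat (Poly_Mapping.lookup m v) *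
        (if fst v = k \<and> finsert (l, snd v) S = T then c * sg {|(l, snd v)|} S * phx al (m - e v) else 0)) +
     (\<Sum>i < length s. (-1) ^ i *
        (if fst (s ! i) = k \<and> A i |\<union>| B i = T then c * sg (A i) (B i) * phx al (m + e (l, snd (s ! i))) else 0))"
    unfolding dm lin_add lin_sum lin_smul X Y by simp
    have fV2: "finite V2"
  proof -
    have "{u. u |\<in>| T \<and> fst u = l} \<subseteq> fset T" by auto
    hence "finite {u. u |\<in>| T \<and> fst u = l}" by (rule finite_subset) simp
    thus ?thesis unfolding V2_def by simp
  qed
  define R where "R v = c * sg {|(l, snd v)|} (T |-| {|(l, snd v)|}) * Phi (al + e v, T |-| {|(l, snd v)|}) (m, S)" for v
  have Xeq: "of_nat (Poly_Mapping.lookup m v) *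
        (if fst v = k \<and> finsert (l, snd v) S = T then c * sg {|(l, snd v)|} S * phx al (m - e v) else 0)
      = (if v \<in> V2 then R v else 0)" for v
  proof -
    have sh: "of_nat (Poly_Mapping.lookup m v) * (c * sg {|(l, snd v)|} S * phx al (m - e v)) =
              c * sg {|(l, snd v)|} S * phx (al + e v) m"
      using phx_shift[of m v al] by (simp add: mult_ac)
    show ?thesis
    proof (cases "v \<in> V2")
      case False
      hence nc: "\<not> (fst v = k \<and> finsert (l, snd v) S = T)" unfolding V2_def by force
      show ?thesis by (subst if_not_P[OF nc], subst if_not_P[OF False]) simp
    next
      case True
      hence fv: "fst v = k" and uT: "(l, snd v) |\<in>| T" unfolding V2_def by auto
      show ?thesis
      proof (cases "S = T |-| {|(l, snd v)|}")
        case True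
        have "finsert (l, snd v) S = T" using True uT by auto
        thus ?thesis using True \<open>v \<in> V2\<close> fv sh by (simp add: R_def Phi_simp)
      next
        case False
        have "\<not> (finsert (l, snd v) S = T \<and> sg {|(l, snd v)|} S \<noteq> 0)"
        proof
          assume h: "finsert (l, snd v) S = T \<and> sg {|(l, snd v)|} S \<noteq> 0"
          hence "(l, snd v) |\<notin>| S" using sg_nz_disj by fastforce
          hence "S = T |-| {|(l, snd v)|}" using h by auto
          thus False using False by simp
        qed
        thus ?thesis using False \<open>v \<in> V2\<close> by (auto simp: R_def Phi_simp)
      qed
    qed
  qed
  have Xsum: "(\<Sum>v \<in> Poly_Mapping.keys m. of_nat (Poly_Mapping.lookup m v) *
        (if fst v = k \<and> finsert (l, snd v) S = T then c * sg {|(l, snd v)|} S * phx al (m - e v) else 0))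
      = (\<Sum>v\<in>V2. R v)"
  proof -
    have "(\<Sum>v \<in> Poly_Mapping.keys m. of_nat (Poly_Mapping.lookup m v) *
        (if fst v = k \<and> finsert (l, snd v) S = T then c * sg {|(l, snd v)|} S * phx al (m - e v) else 0))
        = (\<Sum>v \<in> Poly_Mapping.keys m. if v \<in> V2 then R v else 0)"
      by (rule sum.cong) (simp_all add: Xeq)
    also have "\<dots> = (\<Sum>v \<in> Poly_Mapping.keys m \<inter> V2. R v)"
      by (simp add: sum.inter_restrict)
    also have "\<dots> = (\<Sum>v \<in> V2. R v)"
    proof (rule sum.mono_neutral_left[OF fV2])
      show "Poly_Mapping.keys m \<inter> V2 \<subseteq> V2" by blast
      show "\<forall>i\<in>V2 - Poly_Mapping.keys m \<inter> V2. R i = 0"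
      proof
        fix v assume "v \<in> V2 - Poly_Mapping.keys m \<inter> V2"
        hence mv: "Poly_Mapping.lookup m v = 0" by (auto simp: in_keys_iff)
        have "phx (al + e v) m = 0" by (rule phx_zero_if_big[OF _ mv]) (simp add: lookup_add lookup_e)
        thus "R v = 0" by (simp add: R_def Phi_simp)
      qed
    qed
    finally show ?thesis .
  qed
    have AB: "i < length s \<Longrightarrow> A i |\<union>| B i = S |-| {|s ! i|}" for i
    unfolding A_def B_def s_def by (rule slist_facts(2))
  have tin: "i < length s \<Longrightarrow> s ! i |\<in>| S" for i
    unfolding s_def by (rule slist_facts(1))
  define P where "P i = (if fst (s ! i) = k \<and> S |-| {|s ! i|} = T then g i * phx al (m + e (l, snd (s ! i))) else 0)" for i
  have Ysum0: "(\<Sum>i < length s. (-1) ^ i *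
        (if fst (s ! i) = k \<and> A i |\<union>| B i = T then c * sg (A i) (B i) * phx al (m + e (l, snd (s ! i))) else 0))
      = (\<Sum>i < length s. P i)"
    by (rule sum.cong) (auto simp: AB P_def g_def mult_ac)
  define P1 where "P1 i = (if s ! i = (k, l) \<and> S |-| {|(k, l)|} = T then g i * phx al m else 0)" for i
  define P2 where "P2 i = (if fst (s ! i) = k \<and> S |-| {|s ! i|} = T then g i * (of_nat (Poly_Mapping.lookup al (l, snd (s ! i))) * phx (al - e (l, snd (s ! i))) m) else 0)" for i
  have Psplit: "P i = P1 i + P2 i" for i
    unfolding P_def P1_def P2_def phx_pascal by (cases "s ! i") (auto simp: algebra_simps)
  have P1sum: "(\<Sum>i < length s. P1 i) = Gt c (finsert (k, l) T) (k, l) * Phi (al, finsert (k, l) T) (m, S)"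
  proof (cases "S = finsert (k, l) T")
    case True
    have ST: "S |-| {|(k, l)|} = T" using True t0 by auto
    have "(\<Sum>i < length s. P1 i) = (\<Sum>i < length s. if s ! i = (k, l) then g i else 0) * phx al m"
      unfolding P1_def ST sum_distrib_right by (rule sum.cong) auto
    also have "(\<Sum>i < length s. if s ! i = (k, l) then g i else 0) = Gt c S (k, l)"
      unfolding Gt_def g_def A_def B_def s_def by simp
    finally show ?thesis using True by (simp add: Phi_simp)
  next
    case False
    have "P1 i = 0" if "i < length s" for i
    proof -
      have "\<not> (s ! i = (k, l) \<and> S |-| {|(k, l)|} = T)"
      proof
        assume h: "s ! i = (k, l) \<and> S |-| {|(k, l)|} = T"
        hence "(k, l) |\<in>| S" using tin[OF that] by simp
        hence "S = finsert (k, l) T" using h by auto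
        thus False using False by simp
      qed
      thus ?thesis unfolding P1_def by (rule if_not_P)
    qed
    hence "(\<Sum>i < length s. P1 i) = 0" by simp
    thus ?thesis using False by (simp add: Phi_simp)
  qed
  have fTk: "finite Tk"
  proof -
    have "{j. (l, j) \<in> Poly_Mapping.keys al \<and> (k, j) |\<notin>| T} \<subseteq> snd ` Poly_Mapping.keys al" by force
    hence "finite {j. (l, j) \<in> Poly_Mapping.keys al \<and> (k, j) |\<notin>| T}" by (rule finite_subset) simp
    thus ?thesis unfolding Tk_def by simp
  qed
  define Q where "Q (t::idx) = of_nat (Poly_Mapping.lookup al (l, snd t)) * phx (al - e (l, snd t)) m" for t
  have P2sum: "(\<Sum>i < length s. P2 i) =
     (\<Sum>t\<in>Tk. Gt c (finsert t T) t * of_nat (Poly_Mapping.lookup al (l, snd t)) * Phi (al - e (l, snd t), finsert t T) (m, S))"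
  proof -
    have "(\<Sum>t\<in>Tk. Gt c (finsert t T) t * of_nat (Poly_Mapping.lookup al (l, snd t)) * Phi (al - e (l, snd t), finsert t T) (m, S))
        = (\<Sum>t\<in>Tk. \<Sum>i < length s. if S = finsert t T \<and> s ! i = t then g i * Q t else 0)"
    proof (rule sum.cong[OF refl])
      fix t assume "t \<in> Tk"
      show "Gt c (finsert t T) t * of_nat (Poly_Mapping.lookup al (l, snd t)) * Phi (al - e (l, snd t), finsert t T) (m, S)
         = (\<Sum>i < length s. if S = finsert t T \<and> s ! i = t then g i * Q t else 0)"
      proof (cases "S = finsert t T")
        case True
        have "Gt c S t = (\<Sum>i < length s. if s ! i = t then g i else 0)"
          unfolding Gt_def g_def A_def B_def s_def by simp
        moreover have "(\<Sum>i<length s. if s ! i = t then g i * Q t else 0) = (\<Sum>i<length s. if s ! i = t then g i else 0) * Q t"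
          unfolding sum_distrib_right by (rule sum.cong) auto
        ultimately show ?thesis using True by (simp add: Phi_simp Q_def mult_ac)
      next
        case False thus ?thesis by (simp add: Phi_simp)
      qed
    qed
    also have "\<dots> = (\<Sum>i < length s. \<Sum>t\<in>Tk. if S = finsert t T \<and> s ! i = t then g i * Q t else 0)"
      by (rule sum.swap)
    also have "\<dots> = (\<Sum>i < length s. if s ! i \<in> Tk \<and> S = finsert (s ! i) T then g i * Q (s ! i) else 0)"
    proof (rule sum.cong[OF refl])
      fix i
      have "(\<Sum>t\<in>Tk. if S = finsert t T \<and> s ! i = t then g i * Q t else 0) =
            (\<Sum>t\<in>Tk. if t = s ! i then (if S = finsert (s ! i) T then g i * Q (s ! i) else 0) else 0)"
        by (rule sum.cong) auto
      also have "\<dots> = (if s ! i \<in> Tk \<and> S = finsert (s ! i) T then g i * Q (s ! i) else 0)"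
        using fTk by (simp add: sum.delta)
      finally show "(\<Sum>t\<in>Tk. if S = finsert t T \<and> s ! i = t then g i * Q t else 0) =
            (if s ! i \<in> Tk \<and> S = finsert (s ! i) T then g i * Q (s ! i) else 0)" .
    qed
    also have "\<dots> = (\<Sum>i < length s. P2 i)"
    proof (rule sum.cong[OF refl])
      fix i assume "i \<in> {..<length s}"
      hence ti: "s ! i |\<in>| S" using tin by simp
      show "(if s ! i \<in> Tk \<and> S = finsert (s ! i) T then g i * Q (s ! i) else 0) = P2 i"
      proof (cases "Poly_Mapping.lookup al (l, snd (s ! i)) = 0")
        case True thus ?thesis by (simp add: P2_def Q_def)
      next
        case False
        hence ka: "(l, snd (s ! i)) \<in> Poly_Mapping.keys al" by (simp add: in_keys_iff)
        have "(s ! i \<in> Tk \<and> S = finsert (s ! i) T) \<longleftrightarrow> (fst (s ! i) = k \<and> S |-| {|s ! i|} = T)"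
        proof
          assume h: "s ! i \<in> Tk \<and> S = finsert (s ! i) T"
          hence "fst (s ! i) = k" "s ! i |\<notin>| T" unfolding Tk_def by auto
          thus "fst (s ! i) = k \<and> S |-| {|s ! i|} = T" using h by auto
        next
          assume h: "fst (s ! i) = k \<and> S |-| {|s ! i|} = T"
          hence nT: "s ! i |\<notin>| T" by auto
          have "s ! i = (k, snd (s ! i))" using h by (cases "s ! i") auto
          hence "s ! i \<in> Tk" unfolding Tk_def using ka nT by (metis (mono_tags, lifting) image_eqI mem_Collect_eq)
          moreover have "S = finsert (s ! i) T" using h ti by auto
          ultimately show "s ! i \<in> Tk \<and> S = finsert (s ! i) T" by simp
        qed
        thus ?thesis by (simp add: P2_def Q_def)
      qed
    qed
    finally show ?thesis by simp
  qed
  show ?thesis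
    unfolding lhs Xsum Ysum0 Psplit sum.distrib P1sum P2sum R_def by (simp add: algebra_simps)
qed


lemma Gt_nz:
  assumes c: "c \<noteq> 0" and t: "t |\<in>| S"
  shows "Gt c S t \<noteq> 0"
proof -
  define s where "s = sorted_list_of_fset S"
  have d: "distinct s" unfolding s_def by (rule distinct_slist)
  have "t \<in> set s" using t unfolding s_def by simp
  then obtain i0 where i0: "i0 < length s" "s ! i0 = t" by (auto simp: in_set_conv_nth)
  define g where "g i = (-1) ^ i * c * sg (fset_of_list (take i s)) (fset_of_list (drop (Suc i) s))" for i
  have "Gt c S t = (\<Sum>i<length s. if s ! i = t then g i else 0)"
    unfolding Gt_def g_def s_def by simp
  also have "\<dots> = (\<Sum>i<length s. if i = i0 then g i else 0)"
  proof (rule sum.cong[OF refl])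
    fix i assume "i \<in> {..<length s}"
    hence "s ! i = t \<longleftrightarrow> i = i0" using i0 d by (auto simp: nth_eq_iff_index_eq)
    thus "(if s ! i = t then g i else 0) = (if i = i0 then g i else 0)" by simp
  qed
  also have "\<dots> = g i0" using i0 by simp
  also have "\<dots> \<noteq> 0"
  proof -
    have "fset_of_list (take i0 s) |\<inter>| fset_of_list (drop (Suc i0) s) = {||}"
      using slist_facts(3)[of i0 S] i0 unfolding s_def by simp
    thus ?thesis unfolding g_def sg_def using c by simp
  qed
  finally show ?thesis .
qed




lemma lin_fun_add: "lin (\<lambda>M. w1 M + w2 M) h = lin w1 h + lin w2 h"
  unfolding lin_def by (simp add: distrib_left sum.distrib)

lemma lin_fun_scale: "lin (\<lambda>M. a * w M) h = a * lin w h"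
  unfolding lin_def by (simp add: sum_distrib_left mult_ac)

lemma lin_fun_sum: "lin (\<lambda>M. \<Sum>j\<in>J. a j * W j M) h = (\<Sum>j\<in>J. a j * lin (W j) h)"
  unfolding lin_def by (simp add: sum_distrib_left sum.swap[of _ J] mult_ac)

lemma lin_der': "lin w (der p gx gy f) = lin (\<lambda>M. lin w (der_mono p gx gy M)) f"
  unfolding lin_der by (simp add: lin_def)

definition deg :: "mono \<Rightarrow> nat" where "deg B = degm (fst B) + fcard (snd B)"

lemma degm_add_e: "degm (al + e v) = degm al + 1"
proof -
  define K where "K = Poly_Mapping.keys al \<union> {v}"
  have fK: "finite K" unfolding K_def by simp
  have "degm (al + e v) = (\<Sum>w\<in>K. Poly_Mapping.lookup (al + e v) w)"
    by (rule degm_superset[OF fK]) (use keys_plus_nat[of al "e v"] in \<open>auto simp: K_def\<close>)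
  also have "\<dots> = (\<Sum>w\<in>K. Poly_Mapping.lookup al w) + (\<Sum>w\<in>K. Poly_Mapping.lookup (e v) w)"
    by (simp add: lookup_add sum.distrib)
  also have "(\<Sum>w\<in>K. Poly_Mapping.lookup al w) = degm al"
    by (rule degm_superset[OF fK, symmetric]) (auto simp: K_def)
  also have "(\<Sum>w\<in>K. Poly_Mapping.lookup (e v) w) = 1"
    using fK by (simp add: lookup_e K_def)
  finally show ?thesis .
qed

lemma degm_minus_e: assumes "v \<in> Poly_Mapping.keys al" shows "degm (al - e v) + 1 = degm al"
proof -
  have "al - e v + e v = al"
    using assms by (intro poly_mapping_eqI) (auto simp: lookup_add lookup_minus lookup_e in_keys_iff)
  thus ?thesis using degm_add_e[of "al - e v" v] by simp
qed

lemma lin_Phi_zero_of_all: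
  assumes "\<And>M. w M = (0::complex)" shows "lin w h = 0"
  unfolding lin_def using assms by simp

lemma main_induction:
  assumes z: "zeta ^ 2 = -1" and I: "is_ideal I" and st: "qq_stable zeta I"
    and ev: "\<forall>h\<in>I. lin evM h = 0"
  shows "\<forall>B. deg B = n \<longrightarrow> (\<forall>h\<in>I. lin (Phi B) h = 0)"
proof (induction n rule: less_induct)
  case (less n)
  show ?case
  proof (intro allI impI ballI)
    fix B h assume dB: "deg B = n" and hI: "h \<in> I"
    obtain al' T' where B: "B = (al', T')" by force
    have IH: "lin (Phi B') h' = 0" if "deg B' < n" "h' \<in> I" for B' h'
      using less.IH that by blast
    show "lin (Phi B) h = 0"
    proof (cases "T' = {||}")
      case False
      define t0 where "t0 = fMin T'"
      have t0T: "t0 |\<in>| T'" unfolding t0_def using False by (simp add: fMin_in)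
      obtain k l where t0kl: "t0 = (k, l)" by force
      define T where "T = T' |-| {|t0|}"
      have T'eq: "T' = finsert (k, l) T" unfolding T_def using t0T t0kl by auto
      have nT: "(k, l) |\<notin>| T" unfolding T_def t0kl by simp
      have fcT: "fcard T' = fcard T + 1" unfolding T'eq using nT by (simp add: fcard_finsert_disjoint)
      define c where "c = (1 - zeta) / (1 + zeta)"
      have cnz: "c \<noteq> 0" unfolding c_def using zeta_facts[OF z] by simp
      define V2 where "V2 = (\<lambda>u. (k, snd u)) ` {u. u |\<in>| T \<and> fst u = l}"
      define Tk where "Tk = (\<lambda>j. (k, j)) ` {j. (l, j) \<in> Poly_Mapping.keys al' \<and> (k, j) |\<notin>| T}"
      have Dh: "der True (gxO c k l) (gyO c k l) h \<in> I"
        using st hI act_O[OF z, of l k h] unfolding qq_stable_def c_def by metis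
      have degT: "deg (al', T) < n" using dB fcT unfolding B deg_def by simp
      have "0 = lin (Phi (al', T)) (der True (gxO c k l) (gyO c k l) h)"
        using IH[OF degT Dh] by simp
      also have "\<dots> = lin (\<lambda>M. Gt c (finsert (k, l) T) (k, l) * Phi (al', finsert (k, l) T) M
          + (\<Sum>v\<in>V2. c * sg {|(l, snd v)|} (T |-| {|(l, snd v)|}) * Phi (al' + e v, T |-| {|(l, snd v)|}) M)
          + (\<Sum>t\<in>Tk. Gt c (finsert t T) t * of_nat (Poly_Mapping.lookup al' (l, snd t)) * Phi (al' - e (l, snd t), finsert t T) M)) h"
        unfolding lin_der'
      proof (rule arg_cong[where f = "\<lambda>w. lin w h"], rule ext)
        fix M :: mono obtain m S where M: "M = (m, S)" by force
        show "lin (Phi (al', T)) (der_mono True (gxO c k l) (gyO c k l) M) =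
           Gt c (finsert (k, l) T) (k, l) * Phi (al', finsert (k, l) T) M
          + (\<Sum>v\<in>V2. c * sg {|(l, snd v)|} (T |-| {|(l, snd v)|}) * Phi (al' + e v, T |-| {|(l, snd v)|}) M)
          + (\<Sum>t\<in>Tk. Gt c (finsert t T) t * of_nat (Poly_Mapping.lookup al' (l, snd t)) * Phi (al' - e (l, snd t), finsert t T) M)"
          unfolding M V2_def Tk_def by (rule key_odd[OF nT])
      qed
      also have "\<dots> = Gt c (finsert (k, l) T) (k, l) * lin (Phi (al', finsert (k, l) T)) h
          + (\<Sum>v\<in>V2. c * sg {|(l, snd v)|} (T |-| {|(l, snd v)|}) * lin (Phi (al' + e v, T |-| {|(l, snd v)|})) h)
          + (\<Sum>t\<in>Tk. Gt c (finsert t T) t * of_nat (Poly_Mapping.lookup al' (l, snd t)) * lin (Phi (al' - e (l, snd t), finsert t T)) h)"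
        by (simp only: lin_fun_add lin_fun_scale lin_fun_sum)
      also have "(\<Sum>v\<in>V2. c * sg {|(l, snd v)|} (T |-| {|(l, snd v)|}) * lin (Phi (al' + e v, T |-| {|(l, snd v)|})) h) = 0"
      proof (rule sum.neutral, rule ballI)
        fix v assume "v \<in> V2"
        then obtain u where u: "u |\<in>| T" "fst u = l" "v = (k, snd u)" unfolding V2_def by auto
        have uu: "(l, snd v) = u" using u by (cases u) auto
        have "fcard (T |-| {|(l, snd v)|}) + 1 = fcard T" unfolding uu using u(1)
          by (metis fcard_Suc_fminus1 Suc_eq_plus1)
        hence "deg (al' + e v, T |-| {|(l, snd v)|}) < n"
          using dB fcT unfolding B deg_def by (simp add: degm_add_e)
        thus "c * sg {|(l, snd v)|} (T |-| {|(l, snd v)|}) * lin (Phi (al' + e v, T |-| {|(l, snd v)|})) h = 0"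
          using IH[OF _ hI] by simp
      qed
      also have "(\<Sum>t\<in>Tk. Gt c (finsert t T) t * of_nat (Poly_Mapping.lookup al' (l, snd t)) * lin (Phi (al' - e (l, snd t), finsert t T)) h) = 0"
      proof (rule sum.neutral, rule ballI)
        fix t assume "t \<in> Tk"
        then obtain j where j: "(l, j) \<in> Poly_Mapping.keys al'" "(k, j) |\<notin>| T" "t = (k, j)" unfolding Tk_def by auto
        have d1: "degm (al' - e (l, snd t)) + 1 = degm al'" using degm_minus_e[OF j(1)] j(3) by simp
        have d2: "fcard (finsert t T) = fcard T + 1" using j by (simp add: fcard_finsert_disjoint)
        have "deg (al' - e (l, snd t), finsert t T) < n"
          using dB fcT d1 d2 unfolding B deg_def by simp
        thus "Gt c (finsert t T) t * of_nat (Poly_Mapping.lookup al' (l, snd t)) * lin (Phi (al' - e (l, snd t), finsert t T)) h = 0"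
          using IH[OF _ hI] by simp
      qed
      finally have "Gt c (finsert (k, l) T) (k, l) * lin (Phi (al', finsert (k, l) T)) h = 0" by simp
      moreover have "Gt c (finsert (k, l) T) (k, l) \<noteq> 0" by (rule Gt_nz[OF cnz]) simp
      ultimately show ?thesis unfolding B T'eq by simp
    next
      case True
      show ?thesis
      proof (cases "al' = 0")
        case True
        have "Phi B = evM" unfolding B True \<open>T' = {||}\<close> by (rule Phi_ev)
        thus ?thesis using ev hI by simp
      next
        case False
        then obtain v0 where v0: "v0 \<in> Poly_Mapping.keys al'"
          by (metis keys_eq_empty all_not_in_conv)
        obtain k l where v0kl: "v0 = (k, l)" by force
        define al where "al = al' - e (k, l)"
        have aleq: "al' = al + e (k, l)"
          unfolding al_def using v0 v0kl by (intro poly_mapping_eqI) (auto simp: lookup_add lookup_minus lookup_e in_keys_iff)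
        have dal: "degm al + 1 = degm al'" unfolding aleq by (simp add: degm_add_e)
        define V0 where "V0 = (\<lambda>j. (k, j)) ` {j. (l, j) \<in> Poly_Mapping.keys al}"
        have Dh: "der False (gxL k l) (gyL k l) h \<in> I"
          using st hI act_L[OF z, of l k h] unfolding qq_stable_def by metis
        have degT: "deg (al, {||}) < n" using dB dal unfolding B True deg_def by simp
        have "0 = lin (Phi (al, {||})) (der False (gxL k l) (gyL k l) h)"
          using IH[OF degT Dh] by simp
        also have "\<dots> = lin (\<lambda>M. Phi (al + e (k, l), {||}) M +
            (\<Sum>v\<in>V0. of_nat (Poly_Mapping.lookup al (l, snd v)) * Phi (al - e (l, snd v) + e v, {||}) M)) h"
          unfolding lin_der'
        proof (rule arg_cong[where f = "\<lambda>w. lin w h"], rule ext)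
          fix M :: mono obtain m S where M: "M = (m, S)" by force
          show "lin (Phi (al, {||})) (der_mono False (gxL k l) (gyL k l) M) = Phi (al + e (k, l), {||}) M +
            (\<Sum>v\<in>V0. of_nat (Poly_Mapping.lookup al (l, snd v)) * Phi (al - e (l, snd v) + e v, {||}) M)"
            unfolding M V0_def by (rule key_even)
        qed
        also have "\<dots> = lin (Phi (al + e (k, l), {||})) h +
            (\<Sum>v\<in>V0. of_nat (Poly_Mapping.lookup al (l, snd v)) * lin (Phi (al - e (l, snd v) + e v, {||})) h)"
          by (simp only: lin_fun_add lin_fun_sum)
        also have "(\<Sum>v\<in>V0. of_nat (Poly_Mapping.lookup al (l, snd v)) * lin (Phi (al - e (l, snd v) + e v, {||})) h) = 0"
        proof (rule sum.neutral, rule ballI)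
          fix v assume "v \<in> V0"
          then obtain j where j: "(l, j) \<in> Poly_Mapping.keys al" "v = (k, j)" unfolding V0_def by auto
          have "degm (al - e (l, snd v) + e v) = degm al"
            using degm_minus_e[of "(l, snd v)" al] j by (simp add: degm_add_e)
          hence "deg (al - e (l, snd v) + e v, {||}) < n"
            using dB dal unfolding B True deg_def by simp
          thus "of_nat (Poly_Mapping.lookup al (l, snd v)) * lin (Phi (al - e (l, snd v) + e v, {||})) h = 0"
            using IH[OF _ hI] by simp
        qed
        finally show ?thesis unfolding B True aleq by simp
      qed
    qed
  qed
qed

theorem lemma4p5:
  fixes zeta :: complex and I :: "A set"
  assumes "zeta ^ 2 = -1"
    and "is_ideal I" and "qq_stable zeta I" and "I \<noteq> {0}"
  shows "{f + g | f g. f \<in> I \<and> g \<in> m_ideal} = UNIV"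
proof (cases "\<exists>h\<in>I. lin evM h \<noteq> 0")
  case True
  then obtain h where "h \<in> I" "lin evM h \<noteq> 0" by blast
  thus ?thesis by (rule conclude[OF assms(2)])
next
  case False
  hence ev: "\<forall>h\<in>I. lin evM h = 0" by blast
  have "0 \<in> I" by (rule ideal_zero[OF assms(2)])
  then obtain h where hI: "h \<in> I" and hnz: "h \<noteq> 0" using assms(4) by blast
  obtain B where "lin (Phi B) h \<noteq> 0" using exists_nonzero_Phi[OF hnz] by blast
  moreover have "lin (Phi B) h = 0"
    using main_induction[OF assms(1,2,3) ev, of "deg B"] hI by blast
  ultimately show ?thesis by simp
qed


end
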